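(* Let $(I_t)_{t\in\mathbb{Z}}$ be a stochastic process such that there exists a family $(I_t^n)_{t\in\mathbb{Z}}$, $n\in\mathbb{N}$, of $\{0,1\}$-valued stationary stochastic processes with $P(I_0^n=1)>0$ for all $n$ and $$\mathcal{L}\bigl((I_t^n)_{t\in\{-u,\dots,v\}}\mid I_0^n=1\bigr)\Longrightarrow \mathcal{L}\bigl((I_t)_{t\in\{-u,\dots,v\}}\bigr)\quad (n\to\infty)$$ for all $u,v\in\mathbb{N}$. Define $S^i=\sum_{t\in\mathbb{Z}}I_t\in\mathbb{N}\cup\{\infty\}$, $S_+^i=\sum_{t=1}^\infty I_t$, $S_-^i=\sum_{t=1}^\infty I_{-t}$, and let $S^i_{\pm}$ denote a random variable with the common distribution of $S_+^i$ and $S_-^i$ (these two distributions coincide). Then: (a) For all $k\in\mathbb{N}$, $P(S^i=k)=k\cdot\bigl[P(S^i_{\pm}=k-1)-P(S^i_{\pm}=k)\bigr]$. (b) For all $k\in\mathbb{N}$ with $P(S^i=k)>0$, $P(S_+^i=\ell\mid S^i=k)=P(S_-^i=\ell\mid S^i=k)=\frac1k$ for $\ell=0,\dots,k-1$. (c) If $P(S^i=\infty)>0$, then $P(S_+^i=\infty\mid S^i=\infty)=P(S_-^i=\infty\mid S^i=\infty)=1$.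
   Context: $\mathbb{N}=\{1,2,\dots\}$. $\mathcal{L}(\cdot\mid\cdot)$ denotes conditional law and $\Longrightarrow$ convergence in distribution. In (b) and (c) the paper writes $S^i_{\pm}$ inside the conditional probability, meaning the statement holds for each of $S^i_+$ and $S^i_-$. *)

theory Defs
  imports "HOL-Probability.Probability"
begin

definition window :: "nat \<Rightarrow> nat \<Rightarrow> (int \<Rightarrow> 'a \<Rightarrow> real) \<Rightarrow> 'a \<Rightarrow> (int \<Rightarrow> real)" where
  "window u v X \<omega> = (\<lambda>t. if t \<in> {- int u .. int v} then X t \<omega> else 0)"

definition stationary :: "'a measure \<Rightarrow> (int \<Rightarrow> 'a \<Rightarrow> real) \<Rightarrow> bool" where
  "stationary M X \<longleftrightarrow> (\<forall>h::int.
     distr M (PiM UNIV (\<lambda>_. borel)) (\<lambda>\<omega> t. X (t + h) \<omega>) =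
     distr M (PiM UNIV (\<lambda>_. borel)) (\<lambda>\<omega> t. X t \<omega>))"

definition cond_exp_ev :: "'a measure \<Rightarrow> 'a set \<Rightarrow> ('a \<Rightarrow> real) \<Rightarrow> real" where
  "cond_exp_ev M A f = (\<integral>\<omega>. indicator A \<omega> * f \<omega> \<partial>M) / measure M A"

definition cond_prob_ev :: "'a measure \<Rightarrow> 'a set \<Rightarrow> 'a set \<Rightarrow> real" where
  "cond_prob_ev M B A = measure M (B \<inter> A) / measure M A"

definition Splus :: "(int \<Rightarrow> 'a \<Rightarrow> real) \<Rightarrow> 'a \<Rightarrow> ennreal" where
  "Splus I \<omega> = (\<Sum>t. ennreal (I (int t + 1) \<omega>))"

definition Sminus :: "(int \<Rightarrow> 'a \<Rightarrow> real) \<Rightarrow> 'a \<Rightarrow> ennreal" where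
  "Sminus I \<omega> = (\<Sum>t. ennreal (I (- (int t + 1)) \<omega>))"

definition Stot :: "(int \<Rightarrow> 'a \<Rightarrow> real) \<Rightarrow> 'a \<Rightarrow> ennreal" where
  "Stot I \<omega> = Sminus I \<omega> + ennreal (I 0 \<omega>) + Splus I \<omega>"

end

theory Submission
  imports Defs
begin


definition cl :: "real \<Rightarrow> real" where "cl y = max 0 (min 1 y)"
definition hs :: "real set \<Rightarrow> real \<Rightarrow> real" where
  "hs B y = (if 0 \<in> B then 1 - cl y else 0) + (if 1 \<in> B then cl y else 0)"

lemma cl_cont[continuous_intros]: "continuous_on S f \<Longrightarrow> continuous_on S (\<lambda>x. cl (f x))"
  unfolding cl_def by (intro continuous_intros)
lemma hs_cont[continuous_intros]: "continuous_on S f \<Longrightarrow> continuous_on S (\<lambda>x. hs B (f x))"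
  unfolding hs_def by (cases "0 \<in> B"; cases "1 \<in> B") (auto intro!: continuous_intros)
lemma coord_cont[continuous_intros]: "continuous_on S (\<lambda>x::int\<Rightarrow>real. x i)"
  by (rule continuous_on_subset[OF continuous_on_product_coordinates]) simp
lemma cl_meas[measurable]: "cl \<in> borel_measurable borel"
  unfolding cl_def by measurable
lemma hs_meas[measurable]: "hs B \<in> borel_measurable borel"
  unfolding hs_def by measurable
lemma cl_bnd: "0 \<le> cl y" "cl y \<le> 1" unfolding cl_def by auto
lemma hs_bnd: "0 \<le> hs B y" "hs B y \<le> 1" unfolding hs_def using cl_bnd[of y] by auto
lemma cl_01: "y \<in> {0,1} \<Longrightarrow> cl y = y" unfolding cl_def by auto
lemma hs_01: "y \<in> {0,1} \<Longrightarrow> hs B y = indicator B y" unfolding hs_def cl_def by (auto simp: indicator_def)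

lemma lim_eq_ev: "(f \<longlonglongrightarrow> a) \<Longrightarrow> (g \<longlonglongrightarrow> b) \<Longrightarrow> (\<And>n. n \<ge> 1 \<Longrightarrow> f n = g n) \<Longrightarrow> a = (b::real)"
proof -
  assume f: "(f \<longlonglongrightarrow> a)" and g: "(g \<longlonglongrightarrow> b)" and e: "\<And>n. n \<ge> 1 \<Longrightarrow> f n = g n"
  have "\<forall>\<^sub>F n in sequentially. g n = f n" using e eventually_sequentially by force
  then have "(f \<longlonglongrightarrow> b)" using tendsto_cong g by fastforce
  then show ?thesis using f LIMSEQ_unique by blast
qed

abbreviation PP :: "(int \<Rightarrow> real) measure" where "PP \<equiv> PiM (UNIV::int set) (\<lambda>_. borel)"

lemma path_meas: "(\<And>t. X t \<in> borel_measurable N) \<Longrightarrow> (\<lambda>\<omega> t. X t \<omega>) \<in> measurable N PP"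
  by (rule measurable_PiM_single') (auto simp: space_PiM)

lemma window_in: "(\<And>t. t \<in> K \<Longrightarrow> t \<in> {-int u..int v}) \<Longrightarrow> t \<in> K \<Longrightarrow> window u v X \<omega> t = X t \<omega>"
  unfolding window_def by auto

locale tailsetup =
  fixes M :: "'a measure" and I :: "int \<Rightarrow> 'a \<Rightarrow> real"
    and Mn :: "nat \<Rightarrow> 'b measure" and In :: "nat \<Rightarrow> int \<Rightarrow> 'b \<Rightarrow> real"
  assumes ps: "prob_space M"
    and Imeas[measurable]: "\<And>t. I t \<in> borel_measurable M"
    and psn: "\<And>n. n \<ge> 1 \<Longrightarrow> prob_space (Mn n)"
    and Inmeas: "\<And>n t. n \<ge> 1 \<Longrightarrow> In n t \<in> borel_measurable (Mn n)"
    and In01: "\<And>n t \<omega>. n \<ge> 1 \<Longrightarrow> \<omega> \<in> space (Mn n) \<Longrightarrow> In n t \<omega> \<in> {0, 1}"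
    and stat: "\<And>n. n \<ge> 1 \<Longrightarrow> stationary (Mn n) (In n)"
    and ppos: "\<And>n. n \<ge> 1 \<Longrightarrow> measure (Mn n) {\<omega> \<in> space (Mn n). In n 0 \<omega> = 1} > 0"
    and conv: "\<And>u v (g :: (int \<Rightarrow> real) \<Rightarrow> real). u \<ge> 1 \<Longrightarrow> v \<ge> 1 \<Longrightarrow>
           continuous_on UNIV g \<Longrightarrow> bounded (range g) \<Longrightarrow>
           (\<lambda>n. cond_exp_ev (Mn n) {\<omega> \<in> space (Mn n). In n 0 \<omega> = 1}
                    (\<lambda>\<omega>. g (window u v (In n) \<omega>)))
           \<longlonglongrightarrow> (\<integral>\<omega>. g (window u v I \<omega>) \<partial>M)"
begin

sublocale prob_space M by (rule ps)

lemma bnd1: "(\<And>x. 0 \<le> g x \<and> g x \<le> (1::real)) \<Longrightarrow> bounded (range g)"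
  unfolding bounded_iff by (intro exI[of _ 1]) auto

lemma AE_01: "AE \<omega> in M. I t \<omega> \<in> {0,1}"
proof -
  define g where "g = (\<lambda>x::int\<Rightarrow>real. min 1 \<bar>x t * (1 - x t)\<bar>)"
  define u where "u = nat \<bar>t\<bar> + 1"
  have tw: "t \<in> {- int u .. int u}" unfolding u_def by auto
  have cont: "continuous_on UNIV g" unfolding g_def by (intro continuous_intros)
  have bd: "bounded (range g)" unfolding g_def by (rule bnd1) auto
  have L: "(\<lambda>n. cond_exp_ev (Mn n) {\<omega> \<in> space (Mn n). In n 0 \<omega> = 1}
                    (\<lambda>\<omega>. g (window u u (In n) \<omega>))) \<longlonglongrightarrow> (\<integral>\<omega>. g (window u u I \<omega>) \<partial>M)"
    by (rule conv) (use cont bd in \<open>auto simp: u_def\<close>)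
  have Z: "cond_exp_ev (Mn n) {\<omega> \<in> space (Mn n). In n 0 \<omega> = 1}
                    (\<lambda>\<omega>. g (window u u (In n) \<omega>)) = 0" if "n \<ge> 1" for n
  proof -
    have "(\<integral>\<omega>. indicator {\<omega> \<in> space (Mn n). In n 0 \<omega> = 1} \<omega> * g (window u u (In n) \<omega>) \<partial>Mn n)
        = (\<integral>\<omega>. 0 \<partial>Mn n)"
    proof (rule Bochner_Integration.integral_cong[OF refl])
      fix x assume x: "x \<in> space (Mn n)"
      have "window u u (In n) x t = In n t x" using tw by (simp add: window_def)
      then have "g (window u u (In n) x) = 0" using In01[OF that x, of t] by (auto simp: g_def)
      then show "indicator {\<omega> \<in> space (Mn n). In n 0 \<omega> = 1} x * g (window u u (In n) x) = 0" by simp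
    qed
    then show ?thesis unfolding cond_exp_ev_def by simp
  qed
  have "(\<integral>\<omega>. g (window u u I \<omega>) \<partial>M) = 0"
    by (rule lim_eq_ev[OF L tendsto_const]) (use Z in auto)
  moreover have "(\<lambda>\<omega>. g (window u u I \<omega>)) = (\<lambda>\<omega>. min 1 \<bar>I t \<omega> * (1 - I t \<omega>)\<bar>)"
    using tw by (auto simp: g_def window_def)
  ultimately have i0: "(\<integral>\<omega>. min 1 \<bar>I t \<omega> * (1 - I t \<omega>)\<bar> \<partial>M) = 0" by simp
  have int: "integrable M (\<lambda>\<omega>. min 1 \<bar>I t \<omega> * (1 - I t \<omega>)\<bar>)"
    by (rule integrable_const_bound[where B=1]) auto
  have "AE \<omega> in M. min 1 \<bar>I t \<omega> * (1 - I t \<omega>)\<bar> = 0"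
    using integral_nonneg_eq_0_iff_AE[OF int] i0 by auto
  then show ?thesis by eventually_elim (auto split: if_splits simp: min_def)
qed

lemma AE_I0: "AE \<omega> in M. I 0 \<omega> = 1"
proof -
  define g where "g = (\<lambda>x::int\<Rightarrow>real. min 1 \<bar>1 - x 0\<bar>)"
  have cont: "continuous_on UNIV g" unfolding g_def by (intro continuous_intros)
  have bd: "bounded (range g)" unfolding g_def by (rule bnd1) auto
  have L: "(\<lambda>n. cond_exp_ev (Mn n) {\<omega> \<in> space (Mn n). In n 0 \<omega> = 1}
                    (\<lambda>\<omega>. g (window 1 1 (In n) \<omega>))) \<longlonglongrightarrow> (\<integral>\<omega>. g (window 1 1 I \<omega>) \<partial>M)"
    by (rule conv) (use cont bd in auto)
  have Z: "cond_exp_ev (Mn n) {\<omega> \<in> space (Mn n). In n 0 \<omega> = 1}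
                    (\<lambda>\<omega>. g (window 1 1 (In n) \<omega>)) = 0" if "n \<ge> 1" for n
  proof -
    have "(\<integral>\<omega>. indicator {\<omega> \<in> space (Mn n). In n 0 \<omega> = 1} \<omega> * g (window 1 1 (In n) \<omega>) \<partial>Mn n)
        = (\<integral>\<omega>. 0 \<partial>Mn n)"
    proof (rule Bochner_Integration.integral_cong[OF refl])
      fix x assume x: "x \<in> space (Mn n)"
      have "window 1 1 (In n) x 0 = In n 0 x" by (simp add: window_def)
      then show "indicator {\<omega> \<in> space (Mn n). In n 0 \<omega> = 1} x * g (window 1 1 (In n) x) = 0"
        by (auto simp: g_def indicator_def)
    qed
    then show ?thesis unfolding cond_exp_ev_def by simp
  qed
  have "(\<integral>\<omega>. g (window 1 1 I \<omega>) \<partial>M) = 0"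
    by (rule lim_eq_ev[OF L tendsto_const]) (use Z in auto)
  moreover have "(\<lambda>\<omega>. g (window 1 1 I \<omega>)) = (\<lambda>\<omega>. min 1 \<bar>1 - I 0 \<omega>\<bar>)"
    by (auto simp: g_def window_def)
  ultimately have i0: "(\<integral>\<omega>. min 1 \<bar>1 - I 0 \<omega>\<bar> \<partial>M) = 0" by simp
  have int: "integrable M (\<lambda>\<omega>. min 1 \<bar>1 - I 0 \<omega>\<bar>)"
    by (rule integrable_const_bound[where B=1]) auto
  have "AE \<omega> in M. min 1 \<bar>1 - I 0 \<omega>\<bar> = 0"
    using integral_nonneg_eq_0_iff_AE[OF int] i0 by auto
  then show ?thesis by eventually_elim (auto split: if_splits simp: min_def)
qed

lemma shift_eq:
  fixes s :: int and J :: "int set" and A :: "int \<Rightarrow> real set"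
  assumes J: "finite J"
  shows "(\<integral>\<omega>. cl (I s \<omega>) * (\<Prod>j\<in>J. hs (A j) (I j \<omega>)) \<partial>M)
       = (\<integral>\<omega>. cl (I (-s) \<omega>) * (\<Prod>j\<in>J. hs (A j) (I (j - s) \<omega>)) \<partial>M)"
proof -
  define K where "K = insert s (insert (-s) (J \<union> (\<lambda>j. j - s) ` J))"
  have fK: "finite K" using J by (simp add: K_def)
  define u where "u = nat (Max (abs ` K)) + 1"
  have inK: "t \<in> {-int u..int u}" if "t \<in> K" for t
  proof -
    have "\<bar>t\<bar> \<le> Max (abs ` K)" using fK that by (intro Max_ge) auto
    then show ?thesis unfolding u_def by auto
  qed
  define g1 where "g1 = (\<lambda>x::int\<Rightarrow>real. cl (x s) * (\<Prod>j\<in>J. hs (A j) (x j)))"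
  define g2 where "g2 = (\<lambda>x::int\<Rightarrow>real. cl (x (-s)) * (\<Prod>j\<in>J. hs (A j) (x (j - s))))"
  have w1: "g1 (window u u X \<omega>) = cl (X s \<omega>) * (\<Prod>j\<in>J. hs (A j) (X j \<omega>))" for X :: "int \<Rightarrow> 'c \<Rightarrow> real" and \<omega>
  proof -
    have wi: "window u u X \<omega> t = X t \<omega>" if "t \<in> K" for t using inK[OF that] by (simp add: window_def)
    show ?thesis unfolding g1_def by (auto simp: K_def wi intro!: prod.cong)
  qed
  have w2: "g2 (window u u X \<omega>) = cl (X (-s) \<omega>) * (\<Prod>j\<in>J. hs (A j) (X (j - s) \<omega>))" for X :: "int \<Rightarrow> 'c \<Rightarrow> real" and \<omega>
  proof -
    have wi: "window u u X \<omega> t = X t \<omega>" if "t \<in> K" for t using inK[OF that] by (simp add: window_def)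
    show ?thesis unfolding g2_def by (auto simp: K_def wi intro!: prod.cong)
  qed
  have b01: "0 \<le> cl a * (\<Prod>j\<in>J. hs (A j) (f j)) \<and> cl a * (\<Prod>j\<in>J. hs (A j) (f j)) \<le> 1" for a f
  proof -
    have p0: "0 \<le> (\<Prod>j\<in>J. hs (A j) (f j))" by (rule prod_nonneg) (simp add: hs_bnd)
    have p1: "(\<Prod>j\<in>J. hs (A j) (f j)) \<le> 1" by (rule prod_le_1) (simp add: hs_bnd)
    show ?thesis using cl_bnd[of a] p0 p1 by (simp add: mult_le_one)
  qed
  have c1: "continuous_on UNIV g1" unfolding g1_def by (intro continuous_intros)
  have c2: "continuous_on UNIV g2" unfolding g2_def by (intro continuous_intros)
  have bd1: "bounded (range g1)" unfolding g1_def by (rule bnd1) (use b01 in auto)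
  have bd2: "bounded (range g2)" unfolding g2_def by (rule bnd1) (use b01 in auto)
  note L1 = conv[OF _ _ c1 bd1, of u u] and L2 = conv[OF _ _ c2 bd2, of u u]
  have eqn: "cond_exp_ev (Mn n) {\<omega> \<in> space (Mn n). In n 0 \<omega> = 1} (\<lambda>\<omega>. g1 (window u u (In n) \<omega>))
      = cond_exp_ev (Mn n) {\<omega> \<in> space (Mn n). In n 0 \<omega> = 1} (\<lambda>\<omega>. g2 (window u u (In n) \<omega>))"
    if n: "n \<ge> 1" for n
  proof -
    let ?A = "{\<omega> \<in> space (Mn n). In n 0 \<omega> = 1}"
    define F1 where "F1 = (\<lambda>y::int\<Rightarrow>real. cl (y 0) * (cl (y s) * (\<Prod>j\<in>J. hs (A j) (y j))))"
    have F1m: "F1 \<in> borel_measurable PP" unfolding F1_def by measurable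
    have pm: "(\<lambda>\<omega> t. In n t \<omega>) \<in> measurable (Mn n) PP" by (rule path_meas) (rule Inmeas[OF n])
    have pm2: "(\<lambda>\<omega> t. In n (t + - s) \<omega>) \<in> measurable (Mn n) PP" by (rule path_meas) (rule Inmeas[OF n])
    have ind: "indicator ?A \<omega> = cl (In n 0 \<omega>)" if "\<omega> \<in> space (Mn n)" for \<omega>
      using In01[OF n that, of 0] that by (auto simp: indicator_def cl_def)
    have "(\<integral>\<omega>. indicator ?A \<omega> * g1 (window u u (In n) \<omega>) \<partial>Mn n) = (\<integral>\<omega>. F1 (\<lambda>t. In n t \<omega>) \<partial>Mn n)"
      by (rule Bochner_Integration.integral_cong[OF refl]) (simp add: w1 ind F1_def)
    also have "\<dots> = (\<integral>y. F1 y \<partial>distr (Mn n) PP (\<lambda>\<omega> t. In n t \<omega>))"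
      by (rule integral_distr[symmetric, OF pm F1m])
    also have "\<dots> = (\<integral>y. F1 y \<partial>distr (Mn n) PP (\<lambda>\<omega> t. In n (t + - s) \<omega>))"
      using stat[OF n] unfolding stationary_def by metis
    also have "\<dots> = (\<integral>\<omega>. F1 (\<lambda>t. In n (t + - s) \<omega>) \<partial>Mn n)"
      by (rule integral_distr[OF pm2 F1m])
    also have "\<dots> = (\<integral>\<omega>. indicator ?A \<omega> * g2 (window u u (In n) \<omega>) \<partial>Mn n)"
      by (rule Bochner_Integration.integral_cong[OF refl]) (simp add: w2 ind F1_def)
    finally show ?thesis unfolding cond_exp_ev_def by simp
  qed
  have "(\<integral>\<omega>. g1 (window u u I \<omega>) \<partial>M) = (\<integral>\<omega>. g2 (window u u I \<omega>) \<partial>M)"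
    by (rule lim_eq_ev[OF L1 L2]) (use eqn in \<open>auto simp: u_def\<close>)
  then show ?thesis by (simp add: w1 w2)
qed

lemma AE_all01: "AE \<omega> in M. \<forall>t. I t \<omega> \<in> {0,1}"
  using AE_01 by (simp add: AE_all_countable)

lemma cyl:
  fixes X :: "int \<Rightarrow> 'a \<Rightarrow> real"
  assumes J: "finite J" and Am: "\<And>j. j \<in> J \<Longrightarrow> A j \<in> sets borel" and Xm: "\<And>t. X t \<in> borel_measurable M" and X01: "AE \<omega> in M. \<forall>t. X t \<omega> \<in> {0,1}"
  shows "emeasure (distr (density M (\<lambda>\<omega>. ennreal (X r \<omega>))) PP (\<lambda>\<omega> t. X t \<omega>)) (prod_emb UNIV (\<lambda>_. borel) J (PiE J A))
     = ennreal (\<integral>\<omega>. cl (X r \<omega>) * (\<Prod>j\<in>J. hs (A j) (X j \<omega>)) \<partial>M)"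
proof -
  have pm: "(\<lambda>\<omega> t. X t \<omega>) \<in> measurable M PP" by (rule path_meas) (rule Xm)
  have Xm'[measurable]: "X t \<in> borel_measurable M" for t by (rule Xm)
  have S: "prod_emb UNIV (\<lambda>_. borel) J (PiE J A) \<in> sets PP"
    by (rule sets_PiM_I) (auto simp: J Am)
  let ?B = "{\<omega> \<in> space M. \<forall>j\<in>J. X j \<omega> \<in> A j}"
  have pre: "(\<lambda>\<omega> t. X t \<omega>) -` prod_emb UNIV (\<lambda>_. borel) J (PiE J A) \<inter> space M = ?B"
    by (auto simp: prod_emb_iff)
  have Bm: "?B \<in> sets M"
  proof -
    have "?B = (\<lambda>\<omega> t. X t \<omega>) -` prod_emb UNIV (\<lambda>_. borel) J (PiE J A) \<inter> space M" using pre by simp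
    also have "\<dots> \<in> sets M" using pm S by (rule measurable_sets)
    finally show ?thesis .
  qed
  have "emeasure (distr (density M (\<lambda>\<omega>. ennreal (X r \<omega>))) PP (\<lambda>\<omega> t. X t \<omega>)) (prod_emb UNIV (\<lambda>_. borel) J (PiE J A))
      = emeasure (density M (\<lambda>\<omega>. ennreal (X r \<omega>))) ?B"
    by (subst emeasure_distr) (use pm S pre in auto)
  also have "\<dots> = (\<integral>\<^sup>+\<omega>. ennreal (X r \<omega>) * indicator ?B \<omega> \<partial>M)"
    by (rule emeasure_density) (use Bm in auto)
  also have "\<dots> = (\<integral>\<^sup>+\<omega>. ennreal (cl (X r \<omega>) * (\<Prod>j\<in>J. hs (A j) (X j \<omega>))) \<partial>M)"
  proof (rule nn_integral_cong_AE)
    show "AE \<omega> in M. ennreal (X r \<omega>) * indicator ?B \<omega> = ennreal (cl (X r \<omega>) * (\<Prod>j\<in>J. hs (A j) (X j \<omega>)))"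
      using X01 AE_space
    proof eventually_elim
      case (elim \<omega>)
      have p: "(\<Prod>j\<in>J. hs (A j) (X j \<omega>)) = (\<Prod>j\<in>J. indicator (A j) (X j \<omega>))"
        using elim by (intro prod.cong) (auto simp: hs_01)
      have q: "(\<Prod>j\<in>J. indicator (A j) (X j \<omega>) :: real) = (if \<forall>j\<in>J. X j \<omega> \<in> A j then 1 else 0)"
        using J by (auto simp: indicator_def intro: prod.neutral)
      have r01: "X r \<omega> \<in> {0,1}" using elim by auto
      show ?case unfolding p q using r01 elim by (auto simp: cl_01 indicator_def)
    qed
  qed
  also have "\<dots> = ennreal (\<integral>\<omega>. cl (X r \<omega>) * (\<Prod>j\<in>J. hs (A j) (X j \<omega>)) \<partial>M)"
  proof (rule nn_integral_eq_integral)
    show "integrable M (\<lambda>\<omega>. cl (X r \<omega>) * (\<Prod>j\<in>J. hs (A j) (X j \<omega>)))"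
    proof (rule integrable_const_bound[where B=1])
      show "AE \<omega> in M. norm (cl (X r \<omega>) * (\<Prod>j\<in>J. hs (A j) (X j \<omega>))) \<le> 1"
      proof (rule AE_I2)
        fix \<omega>
        have p0: "0 \<le> (\<Prod>j\<in>J. hs (A j) (X j \<omega>))" by (rule prod_nonneg) (simp add: hs_bnd)
        have p1: "(\<Prod>j\<in>J. hs (A j) (X j \<omega>)) \<le> 1" by (rule prod_le_1) (simp add: hs_bnd)
        show "norm (cl (X r \<omega>) * (\<Prod>j\<in>J. hs (A j) (X j \<omega>))) \<le> 1"
          using cl_bnd[of "X r \<omega>"] p0 p1 by (simp add: abs_mult mult_le_one)
      qed
    qed measurable
    show "AE \<omega> in M. 0 \<le> cl (X r \<omega>) * (\<Prod>j\<in>J. hs (A j) (X j \<omega>))"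
      by (rule AE_I2) (simp add: cl_bnd hs_bnd prod_nonneg)
  qed
  finally show ?thesis .
qed

lemma PQ_eq:
  "distr (density M (\<lambda>\<omega>. ennreal (I s \<omega>))) PP (\<lambda>\<omega> t. I t \<omega>)
   = distr (density M (\<lambda>\<omega>. ennreal (I (0 - s) \<omega>))) PP (\<lambda>\<omega> t. I (t - s) \<omega>)"
  (is "?P = ?Q")
proof -
  have Q01: "AE \<omega> in M. \<forall>t. I (t - s) \<omega> \<in> {0,1}" using AE_all01 by eventually_elim auto
  have cylP: "emeasure ?P (prod_emb UNIV (\<lambda>_. borel) J (PiE J A)) = ennreal (\<integral>\<omega>. cl (I s \<omega>) * (\<Prod>j\<in>J. hs (A j) (I j \<omega>)) \<partial>M)"
    if "finite J" "\<And>j. j \<in> J \<Longrightarrow> A j \<in> sets borel" for J A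
    using cyl[OF that Imeas AE_all01, where r=s] by simp
  have cylQ: "emeasure ?Q (prod_emb UNIV (\<lambda>_. borel) J (PiE J A)) = ennreal (\<integral>\<omega>. cl (I (-s) \<omega>) * (\<Prod>j\<in>J. hs (A j) (I (j - s) \<omega>)) \<partial>M)"
    if "finite J" "\<And>j. j \<in> J \<Longrightarrow> A j \<in> sets borel" for J A
    using cyl[OF that _ Q01, where r=0] by simp
  show ?thesis
  proof (rule measure_eqI_PiM_infinite[where I=UNIV and M="\<lambda>_. borel"])
    show "sets ?P = sets PP" "sets ?Q = sets PP" by simp_all
    show "emeasure ?P (prod_emb UNIV (\<lambda>_. borel) J (PiE J A)) = emeasure ?Q (prod_emb UNIV (\<lambda>_. borel) J (PiE J A))"
      if "finite J" "J \<subseteq> UNIV" "\<And>j. j \<in> J \<Longrightarrow> A j \<in> sets borel" for J A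
      using cylP[OF that(1,3)] cylQ[OF that(1,3)] shift_eq[OF that(1)] by simp
    have sp: "space ?P = prod_emb UNIV (\<lambda>_. borel) {} (PiE {} (\<lambda>_. UNIV))"
      by (auto simp: prod_emb_iff space_PiM restrict_def)
    show "finite_measure ?P"
    proof (rule finite_measureI)
      have "emeasure ?P (space ?P) = ennreal (\<integral>\<omega>. cl (I s \<omega>) * (\<Prod>j\<in>{}. hs ((\<lambda>_. UNIV) j) (I j \<omega>)) \<partial>M)"
        unfolding sp by (rule cylP) auto
      then show "emeasure ?P (space ?P) \<noteq> \<infinity>" by simp
    qed
  qed
qed

lemma TC:
  fixes F :: "(int \<Rightarrow> real) \<Rightarrow> ennreal"
  assumes F: "F \<in> borel_measurable PP"
  shows "(\<integral>\<^sup>+\<omega>. ennreal (I s \<omega>) * F (\<lambda>t. I t \<omega>) \<partial>M) = (\<integral>\<^sup>+\<omega>. ennreal (I (0 - s) \<omega>) * F (\<lambda>t. I (t - s) \<omega>) \<partial>M)"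
proof -
  have pm: "(\<lambda>\<omega> t. I t \<omega>) \<in> measurable M PP" by (rule path_meas) (rule Imeas)
  have pm2: "(\<lambda>\<omega> t. I (t - s) \<omega>) \<in> measurable M PP" by (rule path_meas) (rule Imeas)
  have "(\<integral>\<^sup>+\<omega>. ennreal (I s \<omega>) * F (\<lambda>t. I t \<omega>) \<partial>M)
      = integral\<^sup>N (distr (density M (\<lambda>\<omega>. ennreal (I s \<omega>))) PP (\<lambda>\<omega> t. I t \<omega>)) F"
    using pm F by (simp add: nn_integral_distr nn_integral_density)
  also have "\<dots> = integral\<^sup>N (distr (density M (\<lambda>\<omega>. ennreal (I (0 - s) \<omega>))) PP (\<lambda>\<omega> t. I (t - s) \<omega>)) F"
    by (simp only: PQ_eq)
  also have "\<dots> = (\<integral>\<^sup>+\<omega>. ennreal (I (0 - s) \<omega>) * F (\<lambda>t. I (t - s) \<omega>) \<partial>M)"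
    using pm2 F by (simp add: nn_integral_distr nn_integral_density)
  finally show ?thesis .
qed

end



definition ecard :: "'c set \<Rightarrow> ennreal" where
  "ecard A = (if finite A then of_nat (card A) else \<infinity>)"

definition sp :: "(int \<Rightarrow> real) \<Rightarrow> ennreal" where "sp y = Splus (\<lambda>t y. y t) y"
definition sm :: "(int \<Rightarrow> real) \<Rightarrow> ennreal" where "sm y = Sminus (\<lambda>t y. y t) y"
definition st :: "(int \<Rightarrow> real) \<Rightarrow> ennreal" where "st y = Stot (\<lambda>t y. y t) y"
definition shft :: "int \<Rightarrow> (int \<Rightarrow> real) \<Rightarrow> (int \<Rightarrow> real)" where "shft r y = (\<lambda>t. y (t + r))"
definition is01 :: "(int \<Rightarrow> real) \<Rightarrow> bool" where "is01 y \<longleftrightarrow> (\<forall>t. y t \<in> {0,1})"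

lemma ecard_bij: "bij_betw f A B \<Longrightarrow> ecard A = ecard B"
  unfolding ecard_def using bij_betw_finite bij_betw_same_card by metis

lemma ecard_Un: "A \<inter> B = {} \<Longrightarrow> ecard (A \<union> B) = ecard A + ecard B"
  unfolding ecard_def by (auto simp: card_Un_disjoint)

lemma ecard_empty_iff: "ecard A = 0 \<longleftrightarrow> A = {}"
  unfolding ecard_def by auto

lemma ecard_one: "ecard {a} = 1" unfolding ecard_def by simp

lemma ecard_nat_or_inf: "ecard A = \<infinity> \<or> (\<exists>n. ecard A = of_nat n)"
  unfolding ecard_def by auto

lemma suminf_ind: "(\<Sum>t::nat. (indicator A t :: ennreal)) = ecard A"
proof -
  have "(\<Sum>t::nat. (indicator A t :: ennreal)) = (\<integral>\<^sup>+t. indicator A t \<partial>count_space UNIV)"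
    by (rule nn_integral_count_space_nat[symmetric])
  also have "\<dots> = emeasure (count_space UNIV) A" by simp
  also have "\<dots> = ecard A" by (simp add: emeasure_count_space ecard_def)
  finally show ?thesis .
qed

lemma is01_shift: "is01 y \<Longrightarrow> is01 (shft r y)" unfolding is01_def shft_def by auto
lemma shift_0[simp]: "shft 0 y = y" unfolding shft_def by simp
lemma shift_shift[simp]: "shft a (shft b y) = shft (a + b) y" unfolding shft_def by (simp add: ac_simps)

lemma ennreal01: "x \<in> {0,1} \<Longrightarrow> ennreal x = indicator {1} x" by (auto simp: indicator_def)

lemma enn01: "is01 y \<Longrightarrow> ennreal (y t) = (if y t = 1 then 1 else 0)"
  unfolding is01_def by (cases "y t = 1") (auto, metis ennreal_0)

lemma sp_shift: assumes "is01 y" shows "sp (shft r y) = ecard {t. r < t \<and> y t = 1}"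
proof -
  have "sp (shft r y) = (\<Sum>n. indicator {n::nat. y (int n + 1 + r) = 1} n)"
    unfolding sp_def Splus_def using enn01[OF assms]
    by (intro suminf_cong) (auto simp: indicator_def shft_def)
  also have "\<dots> = ecard {n::nat. y (int n + 1 + r) = 1}" by (rule suminf_ind)
  also have "\<dots> = ecard {t. r < t \<and> y t = 1}"
  proof (rule ecard_bij)
    show "bij_betw (\<lambda>n. int n + 1 + r) {n::nat. y (int n + 1 + r) = 1} {t. r < t \<and> y t = 1}"
    proof (rule bij_betwI[where g="\<lambda>t. nat (t - r - 1)"])
    qed auto
  qed
  finally show ?thesis .
qed

lemma sm_shift: assumes "is01 y" shows "sm (shft r y) = ecard {t. t < r \<and> y t = 1}"
proof -
  have "sm (shft r y) = (\<Sum>n. indicator {n::nat. y (- (int n + 1) + r) = 1} n)"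
    unfolding sm_def Sminus_def using enn01[OF assms]
    by (intro suminf_cong) (auto simp: indicator_def shft_def)
  also have "\<dots> = ecard {n::nat. y (- (int n + 1) + r) = 1}" by (rule suminf_ind)
  also have "\<dots> = ecard {t. t < r \<and> y t = 1}"
  proof (rule ecard_bij)
    show "bij_betw (\<lambda>n. - (int n + 1) + r) {n::nat. y (- (int n + 1) + r) = 1} {t. t < r \<and> y t = 1}"
    proof (rule bij_betwI[where g="\<lambda>t. nat (r - t - 1)"])
    qed auto
  qed
  finally show ?thesis .
qed

lemma st_eq: "st y = sm y + ennreal (y 0) + sp y"
  unfolding st_def sm_def sp_def Stot_def by simp

lemma st_shift: assumes "is01 y" shows "st (shft r y) = ecard {t. y t = 1}"
proof -
  have e: "ennreal (y r) = ecard {t. t = r \<and> y t = 1}"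
  proof (cases "y r = 1")
    case True
    then have "{t. t = r \<and> y t = 1} = {r}" by auto
    then show ?thesis using True by (simp add: ecard_one)
  next
    case False
    then have "{t. t = r \<and> y t = 1} = {}" by auto
    then show ?thesis using False enn01[OF assms, of r] by (simp add: ecard_def)
  qed
  have "{t. y t = 1} = ({t. t < r \<and> y t = 1} \<union> {t. t = r \<and> y t = 1}) \<union> {t. r < t \<and> y t = 1}" by auto
  then have "ecard {t. y t = 1} = ecard {t. t < r \<and> y t = 1} + ecard {t. t = r \<and> y t = 1} + ecard {t. r < t \<and> y t = 1}"
    by (simp add: ecard_Un Int_def)
  then show ?thesis
    using st_eq[of "shft r y"] sm_shift[OF assms] sp_shift[OF assms] e by (simp add: shft_def)
qed

lemma rank_unique:
  fixes Os :: "int set"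
  assumes fin: "finite Os" and k: "card Os = k" and l: "l < k"
  shows "ecard {s \<in> Os. ecard {t \<in> Os. t < s} = of_nat l} = 1"
proof -
  define rk where "rk s = card {t \<in> Os. t < s}" for s
  have ec: "ecard {t \<in> Os. t < s} = of_nat (rk s)" for s using fin by (simp add: ecard_def rk_def)
  have mono: "rk s < rk s'" if "s \<in> Os" "s' \<in> Os" "s < s'" for s s'
    unfolding rk_def by (rule psubset_card_mono) (use fin that in auto)
  have inj: "inj_on rk Os"
    by (rule inj_onI) (metis mono less_irrefl linorder_neqE)
  have rng: "rk ` Os \<subseteq> {..<k}"
  proof
    fix x assume "x \<in> rk ` Os" then obtain s where s: "s \<in> Os" "x = rk s" by auto
    have "rk s < card Os" unfolding rk_def by (rule psubset_card_mono) (use fin s in auto)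
    then show "x \<in> {..<k}" using s k by auto
  qed
  have "card (rk ` Os) = k" using card_image[OF inj] k by simp
  then have "rk ` Os = {..<k}" using rng by (intro card_subset_eq) auto
  then obtain s0 where s0: "s0 \<in> Os" "rk s0 = l" using l by (metis imageE lessThan_iff)
  have "{s \<in> Os. ecard {t \<in> Os. t < s} = of_nat l} = {s0}"
    using s0 inj by (auto simp: ec inj_on_def)
  then show ?thesis by (simp add: ecard_one)
qed

lemma max_unique:
  fixes Os :: "int set"
  assumes z: "0 \<in> Os" and fin: "finite {t \<in> Os. 0 < t}"
  shows "ecard {s \<in> Os. ecard {t \<in> Os. s < t} = 0} = 1"
proof -
  define m where "m = Max {t \<in> Os. 0 \<le> t}"
  have fin2: "finite {t \<in> Os. 0 \<le> t}"
    by (rule finite_subset[of _ "insert 0 {t \<in> Os. 0 < t}"]) (use fin in auto)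
  have m: "m \<in> Os" "0 \<le> m" using Max_in[OF fin2] z unfolding m_def by auto
  have ge: "t \<le> m" if "t \<in> Os" for t
  proof (cases "0 \<le> t")
    case True then show ?thesis unfolding m_def using Max_ge[OF fin2] that by auto
  next
    case False then show ?thesis using m by auto
  qed
  have "{s \<in> Os. ecard {t \<in> Os. s < t} = 0} = {m}"
    using m ge by (auto simp: ecard_empty_iff) (meson ge leD linorder_neqE)+
  then show ?thesis by (simp add: ecard_one)
qed

lemma min_unique:
  fixes Os :: "int set"
  assumes z: "0 \<in> Os" and fin: "finite {t \<in> Os. t < 0}"
  shows "ecard {s \<in> Os. ecard {t \<in> Os. t < s} = 0} = 1"
proof -
  define m where "m = Min {t \<in> Os. t \<le> 0}"
  have fin2: "finite {t \<in> Os. t \<le> 0}"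
    by (rule finite_subset[of _ "insert 0 {t \<in> Os. t < 0}"]) (use fin in auto)
  have m: "m \<in> Os" "m \<le> 0" using Min_in[OF fin2] z unfolding m_def by auto
  have ge: "m \<le> t" if "t \<in> Os" for t
  proof (cases "t \<le> 0")
    case True then show ?thesis unfolding m_def using Min_le[OF fin2] that by auto
  next
    case False then show ?thesis using m by auto
  qed
  have "{s \<in> Os. ecard {t \<in> Os. t < s} = 0} = {m}"
    using m ge by (auto simp: ecard_empty_iff) (meson ge leD linorder_neqE)+
  then show ?thesis by (simp add: ecard_one)
qed




lemma cnt_lemma:
  assumes "is01 y"
  shows "(\<integral>\<^sup>+s. ennreal (y s) * (if P s then 1 else 0) \<partial>count_space UNIV) = ecard {s. y s = 1 \<and> P s}"
proof -
  have "(\<integral>\<^sup>+s. ennreal (y s) * (if P s then 1 else 0) \<partial>count_space UNIV)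
      = (\<integral>\<^sup>+s. indicator {s. y s = 1 \<and> P s} s \<partial>count_space UNIV)"
    by (rule nn_integral_cong) (simp add: enn01[OF assms] indicator_def)
  also have "\<dots> = emeasure (count_space UNIV) {s. y s = 1 \<and> P s}" by simp
  also have "\<dots> = ecard {s. y s = 1 \<and> P s}" by (simp add: emeasure_count_space ecard_def)
  finally show ?thesis .
qed

lemma bij_uminus_int: "bij_betw (uminus :: int \<Rightarrow> int) UNIV UNIV"
  by (rule bij_betwI[where g=uminus]) auto

lemma st_y: "is01 y \<Longrightarrow> st y = ecard {t. y t = 1}"
  using st_shift[of y 0] by simp
lemma sp_y: "is01 y \<Longrightarrow> sp y = ecard {t. 0 < t \<and> y t = 1}"
  using sp_shift[of y 0] by simp
lemma sm_y: "is01 y \<Longrightarrow> sm y = ecard {t. t < 0 \<and> y t = 1}"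
  using sm_shift[of y 0] by simp

lemma ecard_of_nat: "ecard A = of_nat k \<Longrightarrow> finite A \<and> card A = k"
  unfolding ecard_def by (auto split: if_splits)

lemma ecard_fin: "ecard A \<noteq> \<infinity> \<longleftrightarrow> finite A"
  unfolding ecard_def by auto

lemma rank_y:
  assumes y: "is01 y" and k: "st y = of_nat k" and l: "l < k"
  shows "ecard {s. y s = 1 \<and> sm (shft s y) = of_nat l} = 1"
proof -
  define Os where "Os = {t. y t = 1}"
  have fc: "finite Os" "card Os = k" using ecard_of_nat[of Os k] k st_y[OF y] by (auto simp: Os_def)
  have "{s. y s = 1 \<and> sm (shft s y) = of_nat l} = {s \<in> Os. ecard {t \<in> Os. t < s} = of_nat l}"
    by (auto simp: sm_shift[OF y] Os_def conj_commute)
  then show ?thesis using rank_unique[OF fc l] by simp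
qed

lemma max_y:
  assumes y: "is01 y" and y0: "y 0 = 1" and f: "sp y \<noteq> \<infinity>"
  shows "ecard {s. y s = 1 \<and> sp (shft s y) = 0} = 1"
proof -
  define Os where "Os = {t. y t = 1}"
  have fin: "finite {t \<in> Os. 0 < t}" using f sp_y[OF y] ecard_fin by (auto simp: Os_def conj_commute)
  have "{s. y s = 1 \<and> sp (shft s y) = 0} = {s \<in> Os. ecard {t \<in> Os. s < t} = 0}"
    by (auto simp: sp_shift[OF y] Os_def conj_commute)
  then show ?thesis using max_unique[OF _ fin] y0 by (simp add: Os_def)
qed

lemma min_y:
  assumes y: "is01 y" and y0: "y 0 = 1" and f: "sm y \<noteq> \<infinity>"
  shows "ecard {s. y s = 1 \<and> sm (shft s y) = 0} = 1"
proof -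
  define Os where "Os = {t. y t = 1}"
  have fin: "finite {t \<in> Os. t < 0}" using f sm_y[OF y] ecard_fin by (auto simp: Os_def conj_commute)
  have "{s. y s = 1 \<and> sm (shft s y) = 0} = {s \<in> Os. ecard {t \<in> Os. t < s} = 0}"
    by (auto simp: sm_shift[OF y] Os_def conj_commute)
  then show ?thesis using min_unique[OF _ fin] y0 by (simp add: Os_def)
qed

lemma inf_y1:
  assumes y: "is01 y" and y0: "y 0 = 1"
  shows "ecard {s. y s = 1 \<and> sm (shft s y) = \<infinity> \<and> sp (shft s y) \<noteq> \<infinity> \<and> sp y = 0}
       = (if sp y = 0 \<and> sm y = \<infinity> then \<infinity> else 0)"
proof (cases "sp y = 0")
  case False then show ?thesis by (simp add: ecard_def)
next
  case True
  then have np: "\<And>t. 0 < t \<Longrightarrow> y t \<noteq> 1" using sp_y[OF y] by (auto simp: ecard_empty_iff)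
  have le0: "s \<le> 0" if "y s = 1" for s using np that by force
  have spf: "sp (shft s y) \<noteq> \<infinity>" if "y s = 1" for s
  proof -
    have "{t. s < t \<and> y t = 1} \<subseteq> {s<..0}" using np by force
    then have "finite {t. s < t \<and> y t = 1}" using finite_subset by blast
    then show ?thesis by (simp add: sp_shift[OF y] ecard_def)
  qed
  show ?thesis
  proof (cases "sm y = \<infinity>")
    case True
    have inf0: "infinite {t. t < 0 \<and> y t = 1}" using True sm_y[OF y] ecard_fin by metis
    have sminf: "sm (shft s y) = \<infinity>" if "y s = 1" for s
    proof -
      have "{t. t < 0 \<and> y t = 1} \<subseteq> {t. t < s \<and> y t = 1} \<union> {s..0}" by auto
      then have "infinite {t. t < s \<and> y t = 1}" using inf0 finite_subset by blast
      then show ?thesis by (simp add: sm_shift[OF y] ecard_def)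
    qed
    have "{s. y s = 1 \<and> sm (shft s y) = \<infinity> \<and> sp (shft s y) \<noteq> \<infinity> \<and> sp y = 0} = {s. y s = 1}"
      using sminf spf \<open>sp y = 0\<close> by auto
    moreover have "infinite {s. y s = 1}" using inf0 by (rule contrapos_nn) (auto intro: finite_subset)
    ultimately show ?thesis using True \<open>sp y = 0\<close> by (simp add: ecard_def)
  next
    case False
    have fin0: "finite {t. t < 0 \<and> y t = 1}" using False sm_y[OF y] ecard_fin by metis
    have "sm (shft s y) \<noteq> \<infinity>" if "y s = 1" for s
    proof -
      have "{t. t < s \<and> y t = 1} \<subseteq> {t. t < 0 \<and> y t = 1}" using le0[OF that] by auto
      then have "finite {t. t < s \<and> y t = 1}" using fin0 by (rule finite_subset)
      then show ?thesis by (simp add: sm_shift[OF y] ecard_def)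
    qed
    then have "{s. y s = 1 \<and> sm (shft s y) = \<infinity> \<and> sp (shft s y) \<noteq> \<infinity> \<and> sp y = 0} = {}" (is "?S = {}") by auto
    then show ?thesis using False by (simp add: ecard_def del: Collect_empty_eq)
  qed
qed

lemma inf_y2:
  assumes y: "is01 y" and y0: "y 0 = 1"
  shows "ecard {s. y s = 1 \<and> sp (shft s y) = \<infinity> \<and> sm (shft s y) \<noteq> \<infinity> \<and> sm y = 0}
       = (if sm y = 0 \<and> sp y = \<infinity> then \<infinity> else 0)"
proof (cases "sm y = 0")
  case False then show ?thesis by (simp add: ecard_def)
next
  case True
  then have np: "\<And>t. t < 0 \<Longrightarrow> y t \<noteq> 1" using sm_y[OF y] by (auto simp: ecard_empty_iff)
  have le0: "0 \<le> s" if "y s = 1" for s using np that by force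
  have spf: "sm (shft s y) \<noteq> \<infinity>" if "y s = 1" for s
  proof -
    have "{t. t < s \<and> y t = 1} \<subseteq> {0..<s}" using np by force
    then have "finite {t. t < s \<and> y t = 1}" using finite_subset by blast
    then show ?thesis by (simp add: sm_shift[OF y] ecard_def)
  qed
  show ?thesis
  proof (cases "sp y = \<infinity>")
    case True
    have inf0: "infinite {t. 0 < t \<and> y t = 1}" using True sp_y[OF y] ecard_fin by metis
    have sminf: "sp (shft s y) = \<infinity>" if "y s = 1" for s
    proof -
      have "{t. 0 < t \<and> y t = 1} \<subseteq> {t. s < t \<and> y t = 1} \<union> {0..s}" by auto
      then have "infinite {t. s < t \<and> y t = 1}" using inf0 finite_subset by blast
      then show ?thesis by (simp add: sp_shift[OF y] ecard_def)
    qed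
    have "{s. y s = 1 \<and> sp (shft s y) = \<infinity> \<and> sm (shft s y) \<noteq> \<infinity> \<and> sm y = 0} = {s. y s = 1}"
      using sminf spf \<open>sm y = 0\<close> by auto
    moreover have "infinite {s. y s = 1}" using inf0 by (rule contrapos_nn) (auto intro: finite_subset)
    ultimately show ?thesis using True \<open>sm y = 0\<close> by (simp add: ecard_def)
  next
    case False
    have fin0: "finite {t. 0 < t \<and> y t = 1}" using False sp_y[OF y] ecard_fin by metis
    have "sp (shft s y) \<noteq> \<infinity>" if "y s = 1" for s
    proof -
      have "{t. s < t \<and> y t = 1} \<subseteq> {t. 0 < t \<and> y t = 1}" using le0[OF that] by auto
      then have "finite {t. s < t \<and> y t = 1}" using fin0 by (rule finite_subset)
      then show ?thesis by (simp add: sp_shift[OF y] ecard_def)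
    qed
    then have "{s. y s = 1 \<and> sp (shft s y) = \<infinity> \<and> sm (shft s y) \<noteq> \<infinity> \<and> sm y = 0} = {}" (is "?S = {}") by auto
    then show ?thesis using False by (simp add: ecard_def del: Collect_empty_eq)
  qed
qed

lemma sp_meas[measurable]: "sp \<in> borel_measurable PP" unfolding sp_def Splus_def by measurable
lemma sm_meas[measurable]: "sm \<in> borel_measurable PP" unfolding sm_def Sminus_def by measurable
lemma st_meas[measurable]: "st \<in> borel_measurable PP" unfolding st_eq[abs_def] by measurable
lemma sp_shft_meas[measurable]: "(\<lambda>y. sp (shft s y)) \<in> borel_measurable PP"
  unfolding sp_def Splus_def shft_def by measurable
lemma sm_shft_meas[measurable]: "(\<lambda>y. sm (shft s y)) \<in> borel_measurable PP"
  unfolding sm_def Sminus_def shft_def by measurable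
lemma st_shft_meas[measurable]: "(\<lambda>y. st (shft s y)) \<in> borel_measurable PP"
  unfolding st_eq sm_def Sminus_def sp_def Splus_def shft_def by measurable

lemma ecard_cond: "ecard {s. P \<and> R s} = (if P then ecard {s. R s} else 0)"
  by (cases P) (auto simp: ecard_def)

lemma comb_fin:
  assumes y: "is01 y" "y 0 = 1" and k: "st y = of_nat k"
  shows "\<exists>a b. sm y = of_nat a \<and> sp y = of_nat b \<and> a + 1 + b = k"
proof -
  define Os where "Os = {t. y t = 1}"
  define A where "A = {t. t < 0 \<and> y t = 1}"
  define B where "B = {t. 0 < t \<and> y t = 1}"
  have fc: "finite Os" "card Os = k" using ecard_of_nat[of Os k] k st_y[OF y(1)] by (auto simp: Os_def)
  have fA: "finite A" "finite B"
    by (rule finite_subset[OF _ fc(1)], auto simp: A_def B_def Os_def)+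
  have e: "Os = A \<union> insert 0 B" using y(2) by (auto simp: Os_def A_def B_def)
  have c1: "card (insert 0 B) = Suc (card B)" by (rule card_insert_disjoint[OF fA(2)]) (auto simp: B_def)
  have "card Os = card A + card (insert 0 B)" unfolding e using fA
    by (intro card_Un_disjoint) (auto simp: A_def B_def fA)
  then have "card Os = card A + (1 + card B)" using c1 by simp
  moreover have "sm y = of_nat (card A)" "sp y = of_nat (card B)"
    using sm_y[OF y(1)] sp_y[OF y(1)] fA by (auto simp: A_def B_def ecard_def)
  ultimately show ?thesis using fc by auto
qed

lemma st_good: "is01 y \<Longrightarrow> y 0 = 1 \<Longrightarrow> st y = sm y + 1 + sp y"
  by (simp add: st_eq)

lemma sp_nat_inf: "is01 y \<Longrightarrow> sp y = \<infinity> \<or> (\<exists>n. sp y = of_nat n)"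
  using sp_y ecard_nat_or_inf by metis
lemma sm_nat_inf: "is01 y \<Longrightarrow> sm y = \<infinity> \<or> (\<exists>n. sm y = of_nat n)"
  using sm_y ecard_nat_or_inf by metis

lemma test_inj: "(of_nat a :: ennreal) = of_nat b \<longleftrightarrow> a = b" by simp

context tailsetup begin

lemma AE_path01: "AE \<omega> in M. is01 (\<lambda>t. I t \<omega>)"
  using AE_all01 unfolding is01_def by simp

lemma MT:
  fixes Q :: "(int \<Rightarrow> real) \<Rightarrow> int \<Rightarrow> bool"
  assumes Qm: "\<And>s. Measurable.pred PP (\<lambda>y. Q y s)"
  shows "(\<integral>\<^sup>+\<omega>. ecard {s. I s \<omega> = 1 \<and> Q (\<lambda>t. I t \<omega>) s} \<partial>M)
       = (\<integral>\<^sup>+\<omega>. ecard {s. I s \<omega> = 1 \<and> Q (shft s (\<lambda>t. I t \<omega>)) (-s)} \<partial>M)"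
proof -
  define F where "F s y = (if Q y s then 1 else 0 :: ennreal)" for s y
  note Qm[measurable]
  have Fm[measurable]: "F s \<in> borel_measurable PP" for s unfolding F_def by measurable
  have pm[measurable]: "(\<lambda>\<omega> t. I t \<omega>) \<in> measurable M PP" by (rule path_meas) (rule Imeas)
  have pmr[measurable]: "(\<lambda>\<omega> t. I (t + r) \<omega>) \<in> measurable M PP" for r by (rule path_meas) (rule Imeas)
  have m1: "(\<lambda>\<omega>. ennreal (I s \<omega>) * F s (\<lambda>t. I t \<omega>)) \<in> borel_measurable M" for s
    by measurable
  have m2: "(\<lambda>\<omega>. ennreal (I r \<omega>) * F (-r) (\<lambda>t. I (t + r) \<omega>)) \<in> borel_measurable M" for r
    by measurable
  have "(\<integral>\<^sup>+\<omega>. ecard {s. I s \<omega> = 1 \<and> Q (\<lambda>t. I t \<omega>) s} \<partial>M)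
      = (\<integral>\<^sup>+\<omega>. \<integral>\<^sup>+s. ennreal (I s \<omega>) * F s (\<lambda>t. I t \<omega>) \<partial>count_space UNIV \<partial>M)"
    apply (rule nn_integral_cong_AE) using AE_path01 apply eventually_elim
    subgoal for \<omega> using cnt_lemma[of "\<lambda>t. I t \<omega>" "\<lambda>s. Q (\<lambda>t. I t \<omega>) s"] by (simp add: F_def)
    done
  also have "\<dots> = (\<integral>\<^sup>+s. \<integral>\<^sup>+\<omega>. ennreal (I s \<omega>) * F s (\<lambda>t. I t \<omega>) \<partial>M \<partial>count_space UNIV)"
    by (rule nn_integral_count_space_nn_integral) (auto intro: m1)
  also have "\<dots> = (\<integral>\<^sup>+s. \<integral>\<^sup>+\<omega>. ennreal (I (0 - s) \<omega>) * F s (\<lambda>t. I (t - s) \<omega>) \<partial>M \<partial>count_space UNIV)"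
    by (intro nn_integral_cong TC Fm)
  also have "\<dots> = (\<integral>\<^sup>+r. (\<lambda>s. \<integral>\<^sup>+\<omega>. ennreal (I (0 - s) \<omega>) * F s (\<lambda>t. I (t - s) \<omega>) \<partial>M) (uminus r) \<partial>count_space UNIV)"
    by (rule nn_integral_bij_count_space[OF bij_uminus_int, symmetric])
  also have "\<dots> = (\<integral>\<^sup>+r. \<integral>\<^sup>+\<omega>. ennreal (I r \<omega>) * F (-r) (\<lambda>t. I (t + r) \<omega>) \<partial>M \<partial>count_space UNIV)"
    by simp
  also have "\<dots> = (\<integral>\<^sup>+\<omega>. \<integral>\<^sup>+r. ennreal (I r \<omega>) * F (-r) (\<lambda>t. I (t + r) \<omega>) \<partial>count_space UNIV \<partial>M)"
    by (rule nn_integral_count_space_nn_integral[symmetric]) (auto intro: m2)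
  also have "\<dots> = (\<integral>\<^sup>+\<omega>. ecard {s. I s \<omega> = 1 \<and> Q (shft s (\<lambda>t. I t \<omega>)) (-s)} \<partial>M)"
    apply (rule nn_integral_cong_AE) using AE_path01 apply eventually_elim
    subgoal for \<omega> using cnt_lemma[of "\<lambda>t. I t \<omega>" "\<lambda>s. Q (shft s (\<lambda>t. I t \<omega>)) (-s)"] by (simp add: F_def shft_def)
    done
  finally show ?thesis .
qed

lemma AE_good: "AE \<omega> in M. is01 (\<lambda>t. I t \<omega>) \<and> I 0 \<omega> = 1"
  using AE_path01 AE_I0 by eventually_elim auto

lemma pth_meas[measurable]: "(\<lambda>\<omega> t. I t \<omega>) \<in> measurable M PP" by (rule path_meas) (rule Imeas)

lemma core_b:
  assumes l: "l < k" and l': "l' < k"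
  shows "emeasure M {\<omega> \<in> space M. st (\<lambda>t. I t \<omega>) = of_nat k \<and> sm (\<lambda>t. I t \<omega>) = of_nat l}
       = emeasure M {\<omega> \<in> space M. st (\<lambda>t. I t \<omega>) = of_nat k \<and> sm (\<lambda>t. I t \<omega>) = of_nat l'}"
proof -
  define Q where "Q y s = (st y = of_nat k \<and> sm y = of_nat l \<and> sm (shft s y) = of_nat l')" for y s
  have Qm: "Measurable.pred PP (\<lambda>y. Q y s)" for s unfolding Q_def by measurable
  have "emeasure M {\<omega> \<in> space M. st (\<lambda>t. I t \<omega>) = of_nat k \<and> sm (\<lambda>t. I t \<omega>) = of_nat l}
      = (\<integral>\<^sup>+\<omega>. indicator {\<omega> \<in> space M. st (\<lambda>t. I t \<omega>) = of_nat k \<and> sm (\<lambda>t. I t \<omega>) = of_nat l} \<omega> \<partial>M)"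
    by (rule nn_integral_indicator[symmetric]) measurable
  also have "\<dots> = (\<integral>\<^sup>+\<omega>. ecard {s. I s \<omega> = 1 \<and> Q (\<lambda>t. I t \<omega>) s} \<partial>M)"
  proof (rule nn_integral_cong_AE)
    show "AE \<omega> in M. indicator {\<omega> \<in> space M. st (\<lambda>t. I t \<omega>) = of_nat k \<and> sm (\<lambda>t. I t \<omega>) = of_nat l} \<omega>
       = ecard {s. I s \<omega> = 1 \<and> Q (\<lambda>t. I t \<omega>) s}"
      using AE_good AE_space
    proof eventually_elim
      case (elim \<omega>)
      define y where "y = (\<lambda>t. I t \<omega>)"
      have y: "is01 y" using elim by (simp add: y_def)
      show ?case
      proof (cases "st y = of_nat k \<and> sm y = of_nat l")
        case True
        have "{s. I s \<omega> = 1 \<and> Q (\<lambda>t. I t \<omega>) s} = {s. y s = 1 \<and> sm (shft s y) = of_nat l'}"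
          using True by (auto simp: Q_def y_def)
        then show ?thesis using rank_y[OF y _ l'] True elim by (simp add: y_def indicator_def)
      next
        case False
        have "{s. I s \<omega> = 1 \<and> Q (\<lambda>t. I t \<omega>) s} = {}"
          using False by (auto simp: Q_def y_def)
        then show ?thesis using False by (simp add: y_def indicator_def ecard_def del: Collect_empty_eq)
      qed
    qed
  qed
  also have "\<dots> = (\<integral>\<^sup>+\<omega>. ecard {s. I s \<omega> = 1 \<and> Q (shft s (\<lambda>t. I t \<omega>)) (-s)} \<partial>M)"
    by (rule MT[OF Qm])
  also have "\<dots> = (\<integral>\<^sup>+\<omega>. indicator {\<omega> \<in> space M. st (\<lambda>t. I t \<omega>) = of_nat k \<and> sm (\<lambda>t. I t \<omega>) = of_nat l'} \<omega> \<partial>M)"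
  proof (rule nn_integral_cong_AE)
    show "AE \<omega> in M. ecard {s. I s \<omega> = 1 \<and> Q (shft s (\<lambda>t. I t \<omega>)) (-s)}
       = indicator {\<omega> \<in> space M. st (\<lambda>t. I t \<omega>) = of_nat k \<and> sm (\<lambda>t. I t \<omega>) = of_nat l'} \<omega>"
      using AE_good AE_space
    proof eventually_elim
      case (elim \<omega>)
      define y where "y = (\<lambda>t. I t \<omega>)"
      have y: "is01 y" using elim by (simp add: y_def)
      have sty: "st (shft s y) = st y" for s using st_shift[OF y] st_y[OF y] by simp
      have yI: "I s \<omega> = y s" for s by (simp add: y_def)
      show ?case
      proof (cases "st y = of_nat k \<and> sm y = of_nat l'")
        case True
        have "{s. I s \<omega> = 1 \<and> Q (shft s (\<lambda>t. I t \<omega>)) (-s)} = {s. y s = 1 \<and> sm (shft s y) = of_nat l}"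
          using True by (auto simp: Q_def y_def[symmetric] sty yI)
        then show ?thesis using rank_y[OF y _ l] True elim by (simp add: y_def indicator_def)
      next
        case False
        have "{s. I s \<omega> = 1 \<and> Q (shft s (\<lambda>t. I t \<omega>)) (-s)} = {}"
          using False by (auto simp: Q_def y_def[symmetric] sty yI)
        then show ?thesis using False by (simp add: y_def indicator_def ecard_def del: Collect_empty_eq)
      qed
    qed
  qed
  also have "\<dots> = emeasure M {\<omega> \<in> space M. st (\<lambda>t. I t \<omega>) = of_nat k \<and> sm (\<lambda>t. I t \<omega>) = of_nat l'}"
    by (rule nn_integral_indicator) measurable
  finally show ?thesis .
qed

lemma core_c1:
  shows "emeasure M {\<omega> \<in> space M. sm (\<lambda>t. I t \<omega>) = \<infinity> \<and> sp (\<lambda>t. I t \<omega>) \<noteq> \<infinity>} = 0"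
proof -
  define Q where "Q y s = (sm y = \<infinity> \<and> sp y \<noteq> \<infinity> \<and> sp (shft s y) = 0)" for y s
  have Qm: "Measurable.pred PP (\<lambda>y. Q y s)" for s unfolding Q_def by measurable
  let ?E1 = "{\<omega> \<in> space M. sm (\<lambda>t. I t \<omega>) = \<infinity> \<and> sp (\<lambda>t. I t \<omega>) \<noteq> \<infinity>}"
  let ?E2 = "{\<omega> \<in> space M. sp (\<lambda>t. I t \<omega>) = 0 \<and> sm (\<lambda>t. I t \<omega>) = \<infinity>}"
  have "emeasure M ?E1 = (\<integral>\<^sup>+\<omega>. indicator ?E1 \<omega> \<partial>M)"
    by (rule nn_integral_indicator[symmetric]) measurable
  also have "\<dots> = (\<integral>\<^sup>+\<omega>. ecard {s. I s \<omega> = 1 \<and> Q (\<lambda>t. I t \<omega>) s} \<partial>M)"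
  proof (rule nn_integral_cong_AE)
    show "AE \<omega> in M. indicator ?E1 \<omega> = ecard {s. I s \<omega> = 1 \<and> Q (\<lambda>t. I t \<omega>) s}"
      using AE_good AE_space
    proof eventually_elim
      case (elim \<omega>)
      define y where "y = (\<lambda>t. I t \<omega>)"
      have y: "is01 y" "y 0 = 1" using elim by (simp_all add: y_def)
      show ?case
      proof (cases "sm y = \<infinity> \<and> sp y \<noteq> \<infinity>")
        case True
        have "{s. I s \<omega> = 1 \<and> Q (\<lambda>t. I t \<omega>) s} = {s. y s = 1 \<and> sp (shft s y) = 0}"
          using True by (auto simp: Q_def y_def)
        then show ?thesis using max_y[OF y] True elim by (simp add: y_def indicator_def)
      next
        case False
        have "{s. I s \<omega> = 1 \<and> Q (\<lambda>t. I t \<omega>) s} = {}"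
          using False by (auto simp: Q_def y_def)
        then show ?thesis using False by (simp add: y_def indicator_def ecard_def del: Collect_empty_eq)
      qed
    qed
  qed
  also have "\<dots> = (\<integral>\<^sup>+\<omega>. ecard {s. I s \<omega> = 1 \<and> Q (shft s (\<lambda>t. I t \<omega>)) (-s)} \<partial>M)"
    by (rule MT[OF Qm])
  also have "\<dots> = (\<integral>\<^sup>+\<omega>. \<infinity> * indicator ?E2 \<omega> \<partial>M)"
  proof (rule nn_integral_cong_AE)
    show "AE \<omega> in M. ecard {s. I s \<omega> = 1 \<and> Q (shft s (\<lambda>t. I t \<omega>)) (-s)} = \<infinity> * indicator ?E2 \<omega>"
      using AE_good AE_space
    proof eventually_elim
      case (elim \<omega>)
      define y where "y = (\<lambda>t. I t \<omega>)"
      have y: "is01 y" "y 0 = 1" using elim by (simp_all add: y_def)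
      have yI: "I s \<omega> = y s" for s by (simp add: y_def)
      have "{s. I s \<omega> = 1 \<and> Q (shft s (\<lambda>t. I t \<omega>)) (-s)}
          = {s. y s = 1 \<and> sm (shft s y) = \<infinity> \<and> sp (shft s y) \<noteq> \<infinity> \<and> sp y = 0}"
        by (auto simp: Q_def y_def[symmetric] yI)
      then show ?case using inf_y1[OF y] elim by (simp add: y_def indicator_def)
    qed
  qed
  also have "\<dots> = \<infinity> * emeasure M ?E2"
    by (rule nn_integral_cmult_indicator) measurable
  finally have eq: "emeasure M ?E1 = \<infinity> * emeasure M ?E2" .
  have "emeasure M ?E1 \<noteq> \<infinity>" by simp
  then have "emeasure M ?E2 = 0" using eq by (auto simp: ennreal_top_mult split: if_splits)
  then show ?thesis using eq by simp
qed

lemma core_c2: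
  shows "emeasure M {\<omega> \<in> space M. sp (\<lambda>t. I t \<omega>) = \<infinity> \<and> sm (\<lambda>t. I t \<omega>) \<noteq> \<infinity>} = 0"
proof -
  define Q where "Q y s = (sp y = \<infinity> \<and> sm y \<noteq> \<infinity> \<and> sm (shft s y) = 0)" for y s
  have Qm: "Measurable.pred PP (\<lambda>y. Q y s)" for s unfolding Q_def by measurable
  let ?E1 = "{\<omega> \<in> space M. sp (\<lambda>t. I t \<omega>) = \<infinity> \<and> sm (\<lambda>t. I t \<omega>) \<noteq> \<infinity>}"
  let ?E2 = "{\<omega> \<in> space M. sm (\<lambda>t. I t \<omega>) = 0 \<and> sp (\<lambda>t. I t \<omega>) = \<infinity>}"
  have "emeasure M ?E1 = (\<integral>\<^sup>+\<omega>. indicator ?E1 \<omega> \<partial>M)"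
    by (rule nn_integral_indicator[symmetric]) measurable
  also have "\<dots> = (\<integral>\<^sup>+\<omega>. ecard {s. I s \<omega> = 1 \<and> Q (\<lambda>t. I t \<omega>) s} \<partial>M)"
  proof (rule nn_integral_cong_AE)
    show "AE \<omega> in M. indicator ?E1 \<omega> = ecard {s. I s \<omega> = 1 \<and> Q (\<lambda>t. I t \<omega>) s}"
      using AE_good AE_space
    proof eventually_elim
      case (elim \<omega>)
      define y where "y = (\<lambda>t. I t \<omega>)"
      have y: "is01 y" "y 0 = 1" using elim by (simp_all add: y_def)
      show ?case
      proof (cases "sp y = \<infinity> \<and> sm y \<noteq> \<infinity>")
        case True
        have "{s. I s \<omega> = 1 \<and> Q (\<lambda>t. I t \<omega>) s} = {s. y s = 1 \<and> sm (shft s y) = 0}"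
          using True by (auto simp: Q_def y_def)
        then show ?thesis using min_y[OF y] True elim by (simp add: y_def indicator_def)
      next
        case False
        have "{s. I s \<omega> = 1 \<and> Q (\<lambda>t. I t \<omega>) s} = {}"
          using False by (auto simp: Q_def y_def)
        then show ?thesis using False by (simp add: y_def indicator_def ecard_def del: Collect_empty_eq)
      qed
    qed
  qed
  also have "\<dots> = (\<integral>\<^sup>+\<omega>. ecard {s. I s \<omega> = 1 \<and> Q (shft s (\<lambda>t. I t \<omega>)) (-s)} \<partial>M)"
    by (rule MT[OF Qm])
  also have "\<dots> = (\<integral>\<^sup>+\<omega>. \<infinity> * indicator ?E2 \<omega> \<partial>M)"
  proof (rule nn_integral_cong_AE)
    show "AE \<omega> in M. ecard {s. I s \<omega> = 1 \<and> Q (shft s (\<lambda>t. I t \<omega>)) (-s)} = \<infinity> * indicator ?E2 \<omega>"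
      using AE_good AE_space
    proof eventually_elim
      case (elim \<omega>)
      define y where "y = (\<lambda>t. I t \<omega>)"
      have y: "is01 y" "y 0 = 1" using elim by (simp_all add: y_def)
      have yI: "I s \<omega> = y s" for s by (simp add: y_def)
      have "{s. I s \<omega> = 1 \<and> Q (shft s (\<lambda>t. I t \<omega>)) (-s)}
          = {s. y s = 1 \<and> sp (shft s y) = \<infinity> \<and> sm (shft s y) \<noteq> \<infinity> \<and> sm y = 0}"
        by (auto simp: Q_def y_def[symmetric] yI)
      then show ?case using inf_y2[OF y] elim by (simp add: y_def indicator_def)
    qed
  qed
  also have "\<dots> = \<infinity> * emeasure M ?E2"
    by (rule nn_integral_cmult_indicator) measurable
  finally have eq: "emeasure M ?E1 = \<infinity> * emeasure M ?E2" .
  have "emeasure M ?E1 \<noteq> \<infinity>" by simp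
  then have "emeasure M ?E2 = 0" using eq by (auto simp: ennreal_top_mult split: if_splits)
  then show ?thesis using eq by simp
qed


end


context tailsetup begin

abbreviation "SP \<omega> \<equiv> sp (\<lambda>t. I t \<omega>)"
abbreviation "SM \<omega> \<equiv> sm (\<lambda>t. I t \<omega>)"
abbreviation "ST \<omega> \<equiv> st (\<lambda>t. I t \<omega>)"

lemma SP_meas[measurable]: "(\<lambda>\<omega>. SP \<omega>) \<in> borel_measurable M" by measurable
lemma SM_meas[measurable]: "(\<lambda>\<omega>. SM \<omega>) \<in> borel_measurable M" by measurable
lemma ST_meas[measurable]: "(\<lambda>\<omega>. ST \<omega>) \<in> borel_measurable M" by measurable

lemma AE_not_null: "emeasure M {x\<in>space M. P x} = 0 \<Longrightarrow> {x\<in>space M. P x} \<in> sets M \<Longrightarrow> AE x in M. \<not> P x"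
  by (rule AE_I'[where N="{x\<in>space M. P x}"]) auto

lemma AE_inf: "AE \<omega> in M. (SM \<omega> = \<infinity> \<longleftrightarrow> SP \<omega> = \<infinity>)"
proof -
  have a1: "AE \<omega> in M. \<not> (SM \<omega> = \<infinity> \<and> SP \<omega> \<noteq> \<infinity>)"
    by (rule AE_not_null[OF core_c1]) measurable
  have a2: "AE \<omega> in M. \<not> (SP \<omega> = \<infinity> \<and> SM \<omega> \<noteq> \<infinity>)"
    by (rule AE_not_null[OF core_c2]) measurable
  from a1 a2 show ?thesis by eventually_elim auto
qed

lemma blk:
  assumes k: "k \<ge> 1" and l: "l < k"
  shows "measure M {\<omega> \<in> space M. ST \<omega> = of_nat k \<and> SM \<omega> = of_nat l} = measure M {\<omega> \<in> space M. ST \<omega> = of_nat k} / real k"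
proof -
  define E where "E l = {\<omega> \<in> space M. ST \<omega> = of_nat k \<and> SM \<omega> = of_nat l}" for l
  have Em: "E l \<in> sets M" for l unfolding E_def by measurable
  have same: "measure M (E l') = measure M (E 0)" if "l' < k" for l'
  proof -
    have "emeasure M (E l') = emeasure M (E 0)" unfolding E_def by (rule core_b) (use that k in auto)
    then show ?thesis by (simp add: measure_def)
  qed
  have "measure M {\<omega> \<in> space M. ST \<omega> = of_nat k} = measure M (\<Union>l\<in>{..<k}. E l)"
  proof (rule measure_eq_AE)
    show "AE \<omega> in M. (\<omega> \<in> {\<omega> \<in> space M. ST \<omega> = of_nat k}) = (\<omega> \<in> (\<Union>l\<in>{..<k}. E l))"
      using AE_good
    proof eventually_elim
      case (elim \<omega>)
      show ?case
      proof
        assume a: "\<omega> \<in> {\<omega> \<in> space M. ST \<omega> = of_nat k}"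
        have g: "is01 (\<lambda>t. I t \<omega>)" "(\<lambda>t. I t \<omega>) 0 = 1" using elim by simp_all
        have stk: "ST \<omega> = of_nat k" using a by simp
        obtain a b where "SM \<omega> = of_nat a" "a + 1 + b = k"
          using comb_fin[OF g stk] by blast
        then have "a < k" "\<omega> \<in> E a" using a by (auto simp: E_def)
        then show "\<omega> \<in> (\<Union>l\<in>{..<k}. E l)" by blast
      qed (auto simp: E_def)
    qed
    show "{\<omega> \<in> space M. ST \<omega> = of_nat k} \<in> sets M" by measurable
    show "(\<Union>l\<in>{..<k}. E l) \<in> sets M" using Em by blast
  qed
  also have "\<dots> = (\<Sum>l\<in>{..<k}. measure M (E l))"
  proof (rule measure_finite_Union)
    show "E ` {..<k} \<subseteq> sets M" using Em by blast
    show "disjoint_family_on E {..<k}" unfolding disjoint_family_on_def E_def by auto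
  qed simp_all
  also have "\<dots> = (\<Sum>l\<in>{..<k}. measure M (E 0))" by (rule sum.cong[OF refl], rule same, simp)
  also have "\<dots> = real k * measure M (E 0)" by simp
  finally have "measure M {\<omega> \<in> space M. ST \<omega> = of_nat k} = real k * measure M (E 0)" .
  then show ?thesis using same[OF l] k by (simp add: E_def)
qed

lemma blk_p:
  assumes k: "k \<ge> 1" and l: "l < k"
  shows "measure M {\<omega> \<in> space M. ST \<omega> = of_nat k \<and> SP \<omega> = of_nat l} = measure M {\<omega> \<in> space M. ST \<omega> = of_nat k} / real k"
proof -
  have "measure M {\<omega> \<in> space M. ST \<omega> = of_nat k \<and> SP \<omega> = of_nat l} = measure M {\<omega> \<in> space M. ST \<omega> = of_nat k \<and> SM \<omega> = of_nat (k - 1 - l)}"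
  proof (rule measure_eq_AE)
    show "AE \<omega> in M. (\<omega> \<in> {\<omega> \<in> space M. ST \<omega> = of_nat k \<and> SP \<omega> = of_nat l}) = (\<omega> \<in> {\<omega> \<in> space M. ST \<omega> = of_nat k \<and> SM \<omega> = of_nat (k - 1 - l)})"
      using AE_good
    proof eventually_elim
      case (elim \<omega>)
      show ?case
      proof (cases "ST \<omega> = of_nat k")
        case True
        have g: "is01 (\<lambda>t. I t \<omega>)" "(\<lambda>t. I t \<omega>) 0 = 1" using elim by simp_all
        obtain a b where ab: "SM \<omega> = of_nat a" "SP \<omega> = of_nat b" "a + 1 + b = k"
          using comb_fin[OF g True] by blast
        have "b = l \<longleftrightarrow> a = k - 1 - l" using ab(3) l by linarith
        then show ?thesis using True ab(1,2) by simp
      qed simp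
    qed
  qed measurable
  also have "\<dots> = measure M {\<omega> \<in> space M. ST \<omega> = of_nat k} / real k" using k l by (intro blk) auto
  finally show ?thesis .
qed


abbreviation "qq k \<equiv> measure M {\<omega> \<in> space M. ST \<omega> = of_nat k} / real k"

lemma qq_nonneg: "0 \<le> qq k" by simp

lemma zero_sp: assumes "k \<le> l" shows "emeasure M {\<omega> \<in> space M. ST \<omega> = of_nat k \<and> SP \<omega> = of_nat l} = 0"
proof (rule emeasure_eq_0_AE)
  show "AE \<omega> in M. \<not> (ST \<omega> = of_nat k \<and> SP \<omega> = of_nat l)"
    using AE_good
  proof eventually_elim
    case (elim \<omega>)
    show ?case
    proof
      assume a: "ST \<omega> = of_nat k \<and> SP \<omega> = of_nat l"
      have g: "is01 (\<lambda>t. I t \<omega>)" "(\<lambda>t. I t \<omega>) 0 = 1" using elim by simp_all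
      obtain a b where ab: "SM \<omega> = of_nat a" "SP \<omega> = of_nat b" "a + 1 + b = k"
        using comb_fin[OF g] a by blast
      then show False using a assms by simp
    qed
  qed
qed

lemma zero_sm: assumes "k \<le> l" shows "emeasure M {\<omega> \<in> space M. ST \<omega> = of_nat k \<and> SM \<omega> = of_nat l} = 0"
proof (rule emeasure_eq_0_AE)
  show "AE \<omega> in M. \<not> (ST \<omega> = of_nat k \<and> SM \<omega> = of_nat l)"
    using AE_good
  proof eventually_elim
    case (elim \<omega>)
    show ?case
    proof
      assume a: "ST \<omega> = of_nat k \<and> SM \<omega> = of_nat l"
      have g: "is01 (\<lambda>t. I t \<omega>)" "(\<lambda>t. I t \<omega>) 0 = 1" using elim by simp_all
      obtain a b where ab: "SM \<omega> = of_nat a" "SP \<omega> = of_nat b" "a + 1 + b = k"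
        using comb_fin[OF g] a by blast
      then show False using a assms by simp
    qed
  qed
qed

lemma emeas_gen:
  fixes X :: "'a \<Rightarrow> ennreal"
  assumes Xm[measurable]: "X \<in> borel_measurable M"
    and fin: "AE \<omega> in M. X \<omega> = of_nat m \<longrightarrow> (\<exists>k. ST \<omega> = of_nat k)"
    and val: "\<And>k. emeasure M {\<omega> \<in> space M. ST \<omega> = of_nat k \<and> X \<omega> = of_nat m} = ennreal (if m < k then qq k else 0)"
  shows "emeasure M {\<omega> \<in> space M. X \<omega> = of_nat m} = (\<Sum>k. ennreal (if m < k then qq k else 0))"
proof -
  define F where "F k = {\<omega> \<in> space M. ST \<omega> = of_nat k \<and> X \<omega> = of_nat m}" for k :: nat
  have Fm: "F k \<in> sets M" for k unfolding F_def by measurable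
  have "emeasure M {\<omega> \<in> space M. X \<omega> = of_nat m} = emeasure M (\<Union>k. F k)"
  proof (rule emeasure_eq_AE)
    show "AE \<omega> in M. (\<omega> \<in> {\<omega> \<in> space M. X \<omega> = of_nat m}) = (\<omega> \<in> (\<Union>k. F k))"
      using fin by eventually_elim (auto simp: F_def)
  qed (use Fm in auto)
  also have "\<dots> = (\<Sum>k. emeasure M (F k))"
    by (rule suminf_emeasure[symmetric]) (auto simp: Fm disjoint_family_on_def F_def)
  also have "\<dots> = (\<Sum>k. ennreal (if m < k then qq k else 0))"
    by (rule suminf_cong) (simp add: F_def val)
  finally show ?thesis .
qed

lemma fin_sp: "AE \<omega> in M. SP \<omega> = of_nat m \<longrightarrow> (\<exists>k. ST \<omega> = of_nat k)"
  using AE_good AE_inf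
proof eventually_elim
  case (elim \<omega>)
  show ?case
  proof
    assume a: "SP \<omega> = of_nat m"
    have "SM \<omega> \<noteq> \<infinity>" using a elim by auto
    then obtain n where n: "SM \<omega> = of_nat n" using sm_nat_inf[of "\<lambda>t. I t \<omega>"] elim by auto
    have "ST \<omega> = SM \<omega> + 1 + SP \<omega>" using st_good[of "\<lambda>t. I t \<omega>"] elim by simp
    then have "ST \<omega> = of_nat (n + 1 + m)" using n a by simp
    then show "\<exists>k. ST \<omega> = of_nat k" by blast
  qed
qed

lemma fin_sm: "AE \<omega> in M. SM \<omega> = of_nat m \<longrightarrow> (\<exists>k. ST \<omega> = of_nat k)"
  using AE_good AE_inf
proof eventually_elim
  case (elim \<omega>)
  show ?case
  proof
    assume a: "SM \<omega> = of_nat m"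
    have "SP \<omega> \<noteq> \<infinity>" using a elim by auto
    then obtain n where n: "SP \<omega> = of_nat n" using sp_nat_inf[of "\<lambda>t. I t \<omega>"] elim by auto
    have "ST \<omega> = SM \<omega> + 1 + SP \<omega>" using st_good[of "\<lambda>t. I t \<omega>"] elim by simp
    then have "ST \<omega> = of_nat (m + 1 + n)" using n a by simp
    then show "\<exists>k. ST \<omega> = of_nat k" by blast
  qed
qed

lemma emeas_sp: "emeasure M {\<omega> \<in> space M. SP \<omega> = of_nat m} = (\<Sum>k. ennreal (if m < k then qq k else 0))"
proof (rule emeas_gen[OF _ fin_sp])
  fix k
  show "emeasure M {\<omega> \<in> space M. ST \<omega> = of_nat k \<and> SP \<omega> = of_nat m} = ennreal (if m < k then qq k else 0)"
  proof (cases "m < k")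
    case True
    then show ?thesis using blk_p[of k m] by (simp add: emeasure_eq_measure)
  next
    case False
    then show ?thesis using zero_sp[of k m] by simp
  qed
qed measurable

lemma emeas_sm: "emeasure M {\<omega> \<in> space M. SM \<omega> = of_nat m} = (\<Sum>k. ennreal (if m < k then qq k else 0))"
proof (rule emeas_gen[OF _ fin_sm])
  fix k
  show "emeasure M {\<omega> \<in> space M. ST \<omega> = of_nat k \<and> SM \<omega> = of_nat m} = ennreal (if m < k then qq k else 0)"
  proof (cases "m < k")
    case True
    then show ?thesis using blk[of k m] by (simp add: emeasure_eq_measure)
  next
    case False
    then show ?thesis using zero_sm[of k m] by simp
  qed
qed measurable

lemma T_step: "(\<Sum>k. ennreal (if m < k then qq k else 0)) = ennreal (qq (Suc m)) + (\<Sum>k. ennreal (if Suc m < k then qq k else 0))"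
proof -
  have e: "ennreal (if m < k then qq k else 0) = ennreal (if k = Suc m then qq k else 0) + ennreal (if Suc m < k then qq k else 0)" for k
    by (cases "k = Suc m") auto
  have s1: "(\<Sum>k. ennreal (if k = Suc m then qq k else 0)) = ennreal (qq (Suc m))"
    by (subst suminf_finite[of "{Suc m}"]) auto
  have "(\<Sum>k. ennreal (if m < k then qq k else 0)) = (\<Sum>k. ennreal (if k = Suc m then qq k else 0) + ennreal (if Suc m < k then qq k else 0))"
    by (simp only: e)
  also have "\<dots> = (\<Sum>k. ennreal (if k = Suc m then qq k else 0)) + (\<Sum>k. ennreal (if Suc m < k then qq k else 0))"
    by (rule suminf_add[OF summableI summableI, symmetric])
  finally show ?thesis using s1 by simp
qed


lemma Seqs: "Splus I \<omega> = SP \<omega>" "Sminus I \<omega> = SM \<omega>" "Stot I \<omega> = ST \<omega>"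
  by (simp_all add: sp_def sm_def st_def Splus_def Sminus_def Stot_def)

lemma step_real: "measure M {\<omega> \<in> space M. SP \<omega> = of_nat m} = qq (Suc m) + measure M {\<omega> \<in> space M. SP \<omega> = of_nat (Suc m)}"
      "measure M {\<omega> \<in> space M. SM \<omega> = of_nat m} = qq (Suc m) + measure M {\<omega> \<in> space M. SM \<omega> = of_nat (Suc m)}"
proof -
  have "ennreal (measure M {\<omega> \<in> space M. SP \<omega> = of_nat m}) = ennreal (qq (Suc m) + measure M {\<omega> \<in> space M. SP \<omega> = of_nat (Suc m)})"
    using emeas_sp[of m] emeas_sp[of "Suc m"] T_step[of m] by (simp add: emeasure_eq_measure)
  then show "measure M {\<omega> \<in> space M. SP \<omega> = of_nat m} = qq (Suc m) + measure M {\<omega> \<in> space M. SP \<omega> = of_nat (Suc m)}"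
    by (subst (asm) ennreal_inj) auto
  have "ennreal (measure M {\<omega> \<in> space M. SM \<omega> = of_nat m}) = ennreal (qq (Suc m) + measure M {\<omega> \<in> space M. SM \<omega> = of_nat (Suc m)})"
    using emeas_sm[of m] emeas_sm[of "Suc m"] T_step[of m] by (simp add: emeasure_eq_measure)
  then show "measure M {\<omega> \<in> space M. SM \<omega> = of_nat m} = qq (Suc m) + measure M {\<omega> \<in> space M. SM \<omega> = of_nat (Suc m)}"
    by (subst (asm) ennreal_inj) auto
qed

lemma part1: "measure M {\<omega> \<in> space M. SP \<omega> = x} = measure M {\<omega> \<in> space M. SM \<omega> = x}"
proof (cases "x = \<infinity>")
  case True
  show ?thesis unfolding True
    by (rule measure_eq_AE) (use AE_inf in \<open>auto\<close>)
next
  case False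
  show ?thesis
  proof (cases "\<exists>m. x = of_nat m")
    case True
    then obtain m where m: "x = of_nat m" by blast
    show ?thesis unfolding m measure_def using emeas_sp[of m] emeas_sm[of m] by simp
  next
    case nn: False
    have a: "emeasure M {\<omega> \<in> space M. SP \<omega> = x} = 0"
      by (rule emeasure_eq_0_AE) (use AE_good in \<open>eventually_elim, use sp_nat_inf nn False in blast\<close>)
    have b: "emeasure M {\<omega> \<in> space M. SM \<omega> = x} = 0"
      by (rule emeasure_eq_0_AE) (use AE_good in \<open>eventually_elim, use sm_nat_inf nn False in blast\<close>)
    show ?thesis using a b by (simp add: measure_def)
  qed
qed

lemma part4:
  "measure M ({\<omega> \<in> space M. SP \<omega> = \<infinity>} \<inter> {\<omega> \<in> space M. ST \<omega> = \<infinity>}) = measure M {\<omega> \<in> space M. ST \<omega> = \<infinity>}"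
  "measure M ({\<omega> \<in> space M. SM \<omega> = \<infinity>} \<inter> {\<omega> \<in> space M. ST \<omega> = \<infinity>}) = measure M {\<omega> \<in> space M. ST \<omega> = \<infinity>}"
proof -
  have e: "AE \<omega> in M. (ST \<omega> = \<infinity> \<longleftrightarrow> SP \<omega> = \<infinity>) \<and> (ST \<omega> = \<infinity> \<longleftrightarrow> SM \<omega> = \<infinity>)"
    using AE_good AE_inf
  proof eventually_elim
    case (elim \<omega>)
    have "ST \<omega> = SM \<omega> + 1 + SP \<omega>" using st_good[of "\<lambda>t. I t \<omega>"] elim by simp
    then show ?case using elim by (auto simp: ennreal_add_eq_top)
  qed
  show "measure M ({\<omega> \<in> space M. SP \<omega> = \<infinity>} \<inter> {\<omega> \<in> space M. ST \<omega> = \<infinity>}) = measure M {\<omega> \<in> space M. ST \<omega> = \<infinity>}"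
    by (rule measure_eq_AE) (use e in auto)
  show "measure M ({\<omega> \<in> space M. SM \<omega> = \<infinity>} \<inter> {\<omega> \<in> space M. ST \<omega> = \<infinity>}) = measure M {\<omega> \<in> space M. ST \<omega> = \<infinity>}"
    by (rule measure_eq_AE) (use e in auto)
qed


lemma main:
  shows "(\<forall>x. measure M {\<omega> \<in> space M. Splus I \<omega> = x}
              = measure M {\<omega> \<in> space M. Sminus I \<omega> = x})
    \<and> (\<forall>k::nat. k \<ge> 1 \<longrightarrow>
         measure M {\<omega> \<in> space M. Stot I \<omega> = of_nat k}
           = real k * (measure M {\<omega> \<in> space M. Splus I \<omega> = of_nat (k - 1)}
                        - measure M {\<omega> \<in> space M. Splus I \<omega> = of_nat k})
       \<and> measure M {\<omega> \<in> space M. Stot I \<omega> = of_nat k}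
           = real k * (measure M {\<omega> \<in> space M. Sminus I \<omega> = of_nat (k - 1)}
                        - measure M {\<omega> \<in> space M. Sminus I \<omega> = of_nat k}))
    \<and> (\<forall>k::nat. k \<ge> 1 \<longrightarrow> measure M {\<omega> \<in> space M. Stot I \<omega> = of_nat k} > 0 \<longrightarrow>
         (\<forall>l<k.
            cond_prob_ev M {\<omega> \<in> space M. Splus I \<omega> = of_nat l}
                           {\<omega> \<in> space M. Stot I \<omega> = of_nat k} = 1 / real k
          \<and> cond_prob_ev M {\<omega> \<in> space M. Sminus I \<omega> = of_nat l}
                           {\<omega> \<in> space M. Stot I \<omega> = of_nat k} = 1 / real k))
    \<and> (measure M {\<omega> \<in> space M. Stot I \<omega> = \<infinity>} > 0 \<longrightarrow>
         cond_prob_ev M {\<omega> \<in> space M. Splus I \<omega> = \<infinity>}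
                        {\<omega> \<in> space M. Stot I \<omega> = \<infinity>} = 1
       \<and> cond_prob_ev M {\<omega> \<in> space M. Sminus I \<omega> = \<infinity>}
                        {\<omega> \<in> space M. Stot I \<omega> = \<infinity>} = 1)"
proof -
  have P2: "measure M {\<omega> \<in> space M. ST \<omega> = of_nat k}
           = real k * (measure M {\<omega> \<in> space M. SP \<omega> = of_nat (k - 1)}
                        - measure M {\<omega> \<in> space M. SP \<omega> = of_nat k})
       \<and> measure M {\<omega> \<in> space M. ST \<omega> = of_nat k}
           = real k * (measure M {\<omega> \<in> space M. SM \<omega> = of_nat (k - 1)}
                        - measure M {\<omega> \<in> space M. SM \<omega> = of_nat k})" if k: "k \<ge> 1" for k
  proof -
    have sk: "Suc (k - 1) = k" using k by simp
    have a: "measure M {\<omega> \<in> space M. SP \<omega> = of_nat (k - 1)} - measure M {\<omega> \<in> space M. SP \<omega> = of_nat k} = qq k"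
      using step_real(1)[of "k - 1"] sk by simp
    have b: "measure M {\<omega> \<in> space M. SM \<omega> = of_nat (k - 1)} - measure M {\<omega> \<in> space M. SM \<omega> = of_nat k} = qq k"
      using step_real(2)[of "k - 1"] sk by simp
    have c: "real k * qq k = measure M {\<omega> \<in> space M. ST \<omega> = of_nat k}" using k by simp
    show ?thesis using a b c by simp
  qed
  have P3: "cond_prob_ev M {\<omega> \<in> space M. SP \<omega> = of_nat l} {\<omega> \<in> space M. ST \<omega> = of_nat k} = 1 / real k
          \<and> cond_prob_ev M {\<omega> \<in> space M. SM \<omega> = of_nat l} {\<omega> \<in> space M. ST \<omega> = of_nat k} = 1 / real k"
    if k: "k \<ge> 1" and pos: "measure M {\<omega> \<in> space M. ST \<omega> = of_nat k} > 0" and l: "l < k" for k l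
  proof -
    have i1: "{\<omega> \<in> space M. SP \<omega> = of_nat l} \<inter> {\<omega> \<in> space M. ST \<omega> = of_nat k} = {\<omega> \<in> space M. ST \<omega> = of_nat k \<and> SP \<omega> = of_nat l}" by auto
    have i2: "{\<omega> \<in> space M. SM \<omega> = of_nat l} \<inter> {\<omega> \<in> space M. ST \<omega> = of_nat k} = {\<omega> \<in> space M. ST \<omega> = of_nat k \<and> SM \<omega> = of_nat l}" by auto
    show ?thesis unfolding cond_prob_ev_def i1 i2 blk_p[OF k l] blk[OF k l] using pos by simp
  qed
  have P4: "cond_prob_ev M {\<omega> \<in> space M. SP \<omega> = \<infinity>} {\<omega> \<in> space M. ST \<omega> = \<infinity>} = 1
       \<and> cond_prob_ev M {\<omega> \<in> space M. SM \<omega> = \<infinity>} {\<omega> \<in> space M. ST \<omega> = \<infinity>} = 1"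
    if pos: "measure M {\<omega> \<in> space M. ST \<omega> = \<infinity>} > 0"
    unfolding cond_prob_ev_def part4 using pos by simp
  show ?thesis unfolding Seqs using part1 P2 P3 P4 by blast
qed

end

theorem theorem3p3:
  fixes M :: "'a measure" and I :: "int \<Rightarrow> 'a \<Rightarrow> real"
    and Mn :: "nat \<Rightarrow> 'b measure" and In :: "nat \<Rightarrow> int \<Rightarrow> 'b \<Rightarrow> real"
  assumes "prob_space M"
    and "\<And>t. I t \<in> borel_measurable M"
    and "\<And>n. n \<ge> 1 \<Longrightarrow> prob_space (Mn n)"
    and "\<And>n t. n \<ge> 1 \<Longrightarrow> In n t \<in> borel_measurable (Mn n)"
    and "\<And>n t \<omega>. n \<ge> 1 \<Longrightarrow> \<omega> \<in> space (Mn n) \<Longrightarrow> In n t \<omega> \<in> {0, 1}"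
    and "\<And>n. n \<ge> 1 \<Longrightarrow> stationary (Mn n) (In n)"
    and "\<And>n. n \<ge> 1 \<Longrightarrow> measure (Mn n) {\<omega> \<in> space (Mn n). In n 0 \<omega> = 1} > 0"
    and "\<And>u v (g :: (int \<Rightarrow> real) \<Rightarrow> real). u \<ge> 1 \<Longrightarrow> v \<ge> 1 \<Longrightarrow>
           continuous_on UNIV g \<Longrightarrow> bounded (range g) \<Longrightarrow>
           (\<lambda>n. cond_exp_ev (Mn n) {\<omega> \<in> space (Mn n). In n 0 \<omega> = 1}
                    (\<lambda>\<omega>. g (window u v (In n) \<omega>)))
           \<longlonglongrightarrow> (\<integral>\<omega>. g (window u v I \<omega>) \<partial>M)"
  shows "(\<forall>x. measure M {\<omega> \<in> space M. Splus I \<omega> = x}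
              = measure M {\<omega> \<in> space M. Sminus I \<omega> = x})
    \<and> (\<forall>k::nat. k \<ge> 1 \<longrightarrow>
         measure M {\<omega> \<in> space M. Stot I \<omega> = of_nat k}
           = real k * (measure M {\<omega> \<in> space M. Splus I \<omega> = of_nat (k - 1)}
                        - measure M {\<omega> \<in> space M. Splus I \<omega> = of_nat k})
       \<and> measure M {\<omega> \<in> space M. Stot I \<omega> = of_nat k}
           = real k * (measure M {\<omega> \<in> space M. Sminus I \<omega> = of_nat (k - 1)}
                        - measure M {\<omega> \<in> space M. Sminus I \<omega> = of_nat k}))
    \<and> (\<forall>k::nat. k \<ge> 1 \<longrightarrow> measure M {\<omega> \<in> space M. Stot I \<omega> = of_nat k} > 0 \<longrightarrow>
         (\<forall>l<k.
            cond_prob_ev M {\<omega> \<in> space M. Splus I \<omega> = of_nat l}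
                           {\<omega> \<in> space M. Stot I \<omega> = of_nat k} = 1 / real k
          \<and> cond_prob_ev M {\<omega> \<in> space M. Sminus I \<omega> = of_nat l}
                           {\<omega> \<in> space M. Stot I \<omega> = of_nat k} = 1 / real k))
    \<and> (measure M {\<omega> \<in> space M. Stot I \<omega> = \<infinity>} > 0 \<longrightarrow>
         cond_prob_ev M {\<omega> \<in> space M. Splus I \<omega> = \<infinity>}
                        {\<omega> \<in> space M. Stot I \<omega> = \<infinity>} = 1
       \<and> cond_prob_ev M {\<omega> \<in> space M. Sminus I \<omega> = \<infinity>}
                        {\<omega> \<in> space M. Stot I \<omega> = \<infinity>} = 1)"
  proof -
  interpret tailsetup M I Mn In
    by (rule tailsetup.intro) (fact assms)+
  show ?thesis by (rule main)
qed

end
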